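(* Let ${\bf v}\in\mathcal V$. (a) If ${\bf v}$ has at most $\lfloor n/2\rfloor$ positive prizes (i.e. $v_r=0$ for all $r>\lfloor n/2\rfloor$), then $L({\bf v})\le 0$, so $M({\bf v},\theta)$ and the symmetric equilibrium effort $x^*({\bf v},\theta)$ are nonincreasing in $\theta\in[0,1]$ (effort decreases with loss aversion). (b) If ${\bf v}$ has at least $\lceil n/2\rceil$ equal prizes at the top (i.e. $v_1=v_2=\dots=v_{\lceil n/2\rceil}$), then $L({\bf v})\ge 0$, so $M({\bf v},\theta)$ and $x^*({\bf v},\theta)$ are nondecreasing in $\theta\in[0,1]$ (effort increases with loss aversion).
   Context: Fix an integer $n\ge 2$ and a noise distribution with cdf $F$ and density $f$ on $\mathbb R$ (integrals finite). For $r=1,\dots,n$ let $g_r(u)=u^{n-r}(1-u)^{r-1}$ and $\beta_r=\binom{n-1}{r-1}\int g_r'(F(t))f(t)^2dt$; $B_r=\sum_{k=1}^r\beta_k$. Let $\mathcal V=\{{\bf v}\in\mathbb R^n: v_1\ge\dots\ge v_n\ge 0,\ \sum_r v_r=1\}$, $R({\bf v})=\sum_r\beta_rv_r$, $L({\bf v})=-\frac1n\sum_{r=1}^n\sum_{s<r}(\beta_r+\beta_s)(v_s-v_r)$, $M({\bf v},\theta)=R({\bf v})+\theta L({\bf v})$ with loss-aversion parameter $\theta\in[0,1]$. The effort cost $c$ is strictly increasing, differentiable and strictly convex on $[0,\bar x]$, $\bar x=c^{-1}(1)$, with $c(0)=c'(0)=0$. The symmetric equilibrium effort $x^*({\bf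 v},\theta)$ is the effort solving the first-order condition $c'(x^* )=M({\bf v},\theta)$; since $c'$ is strictly increasing, $x^*$ is a strictly increasing function of $M({\bf v},\theta)$. *)

theory Defs
  imports "HOL-Analysis.Analysis"
begin

text \<open>Prize vectors are functions nat => real, indexed by r = 1..n.\<close>

definition g :: "nat \<Rightarrow> nat \<Rightarrow> real \<Rightarrow> real" where
  "g n r u = u ^ (n - r) * (1 - u) ^ (r - 1)"

definition beta :: "(real \<Rightarrow> real) \<Rightarrow> (real \<Rightarrow> real) \<Rightarrow> nat \<Rightarrow> nat \<Rightarrow> real" where
  "beta F f n r = real ((n - 1) choose (r - 1)) *
      (LINT t|lborel. deriv (g n r) (F t) * (f t)^2)"

definition Bsum :: "(real \<Rightarrow> real) \<Rightarrow> (real \<Rightarrow> real) \<Rightarrow> nat \<Rightarrow> nat \<Rightarrow> real" where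
  "Bsum F f n r = (\<Sum>k=1..r. beta F f n k)"

definition prizeV :: "nat \<Rightarrow> (nat \<Rightarrow> real) set" where
  "prizeV n = {v. (\<forall>r. 1 \<le> r \<and> r < n \<longrightarrow> v (Suc r) \<le> v r) \<and> v n \<ge> 0
                 \<and> (\<Sum>r=1..n. v r) = 1}"

definition Rf :: "(real \<Rightarrow> real) \<Rightarrow> (real \<Rightarrow> real) \<Rightarrow> nat \<Rightarrow> (nat \<Rightarrow> real) \<Rightarrow> real" where
  "Rf F f n v = (\<Sum>r=1..n. beta F f n r * v r)"

definition Lf :: "(real \<Rightarrow> real) \<Rightarrow> (real \<Rightarrow> real) \<Rightarrow> nat \<Rightarrow> (nat \<Rightarrow> real) \<Rightarrow> real" where
  "Lf F f n v = - (1 / real n) * (\<Sum>r=1..n. \<Sum>s=1..<r.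
       (beta F f n r + beta F f n s) * (v s - v r))"

definition Mf :: "(real \<Rightarrow> real) \<Rightarrow> (real \<Rightarrow> real) \<Rightarrow> nat \<Rightarrow> (nat \<Rightarrow> real) \<Rightarrow> real \<Rightarrow> real" where
  "Mf F f n v \<theta> = Rf F f n v + \<theta> * Lf F f n v"

definition strictly_convex_on :: "real set \<Rightarrow> (real \<Rightarrow> real) \<Rightarrow> bool" where
  "strictly_convex_on S c \<longleftrightarrow> (\<forall>x\<in>S. \<forall>y\<in>S. \<forall>t. x \<noteq> y \<and> 0 < t \<and> t < 1 \<longrightarrow>
      c ((1 - t) * x + t * y) < (1 - t) * c x + t * c y)"

end

theory Submission imports Defs begin


lemma telesc:
  fixes b v :: "nat \<Rightarrow> real"
  shows "(\<Sum>j=1..<n. (v j - v (j+1)) * (\<Sum>k=1..j. b k)) = (\<Sum>j=1..n. v j * b j) - v n * (\<Sum>k=1..n. b k)"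
proof (induction n)
  case 0 then show ?case by simp
next
  case (Suc n)
  show ?case
  proof (cases "n = 0")
    case True then show ?thesis by simp
  next
    case False
    have "(\<Sum>j=1..<Suc n. (v j - v (j+1)) * (\<Sum>k=1..j. b k)) = (\<Sum>j=1..<n. (v j - v (j+1)) * (\<Sum>k=1..j. b k)) + (v n - v (n+1)) * (\<Sum>k=1..n. b k)"
      using False by simp
    also have "\<dots> = (\<Sum>j=1..Suc n. v j * b j) - v (Suc n) * (\<Sum>k=1..Suc n. b k)"
      using Suc by (simp add: algebra_simps)
    finally show ?thesis .
  qed
qed

lemma Sform:
  fixes b v :: "nat \<Rightarrow> real"
  shows "(\<Sum>r=1..m. \<Sum>s=1..<r. (b r + b s) * (v s - v r)) =
     (\<Sum>j=1..<m. (v j - v (j+1)) * (real m - 2 * real j) * (\<Sum>k=1..j. b k))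
     - real m * v m * (\<Sum>k=1..m. b k) + (\<Sum>k=1..m. b k) * (\<Sum>k=1..m. v k)"
proof (induction m)
  case 0 then show ?case by simp
next
  case (Suc n)
  define B where "B = (\<Sum>k=1..n. b k)"
  define V where "V = (\<Sum>k=1..n. v k)"
  have tel: "(\<Sum>j=1..<n. (v j - v (j+1)) * B' j) = (\<Sum>j=1..n. v j * b j) - v n * B"
    if "B' = (\<lambda>j. \<Sum>k=1..j. b k)" for B' using telesc[of v b n] that B_def by simp
  have L: "(\<Sum>r=1..Suc n. \<Sum>s=1..<r. (b r + b s) * (v s - v r)) =
      (\<Sum>r=1..n. \<Sum>s=1..<r. (b r + b s) * (v s - v r)) + (\<Sum>s=1..n. (b (Suc n) + b s) * (v s - v (Suc n)))"
    by (simp add: atLeastLessThanSuc_atLeastAtMost)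
  have L2: "(\<Sum>s=1..n. (b (Suc n) + b s) * (v s - v (Suc n))) = b (Suc n) * V + (\<Sum>s=1..n. v s * b s) - real n * b (Suc n) * v (Suc n) - B * v (Suc n)"
    unfolding V_def B_def by (simp add: algebra_simps sum.distrib sum_subtractf sum_distrib_left sum_distrib_right)
  have R: "(\<Sum>j=1..<Suc n. (v j - v (j+1)) * (real (Suc n) - 2 * real j) * (\<Sum>k=1..j. b k))
     = (\<Sum>j=1..<n. (v j - v (j+1)) * (real n - 2 * real j) * (\<Sum>k=1..j. b k))
       + (\<Sum>j=1..<n. (v j - v (j+1)) * (\<Sum>k=1..j. b k))
       + (if n = 0 then 0 else (v n - v (n+1)) * (1 - real n) * B)"
  proof (cases "n = 0")
    case True then show ?thesis by simp
  next
    case False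
    then have "(\<Sum>j=1..<Suc n. (v j - v (j+1)) * (real (Suc n) - 2 * real j) * (\<Sum>k=1..j. b k))
      = (\<Sum>j=1..<n. (v j - v (j+1)) * (real (Suc n) - 2 * real j) * (\<Sum>k=1..j. b k)) + (v n - v (n+1)) * (1 - real n) * B"
      by (simp add: B_def algebra_simps)
    also have "(\<Sum>j=1..<n. (v j - v (j+1)) * (real (Suc n) - 2 * real j) * (\<Sum>k=1..j. b k))
      = (\<Sum>j=1..<n. (v j - v (j+1)) * (real n - 2 * real j) * (\<Sum>k=1..j. b k))
       + (\<Sum>j=1..<n. (v j - v (j+1)) * (\<Sum>k=1..j. b k))"
      by (simp add: algebra_simps sum.distrib[symmetric])
    finally show ?thesis using False by simp
  qed
  have T: "(\<Sum>j=1..<n. (v j - v (j+1)) * (\<Sum>k=1..j. b k)) = (\<Sum>j=1..n. v j * b j) - v n * B"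
    using tel by blast
  have SB: "(\<Sum>k=1..Suc n. b k) = B + b (Suc n)" "(\<Sum>k=1..Suc n. v k) = V + v (Suc n)"
    by (simp_all add: B_def V_def)
  show ?case
    unfolding L L2 R T SB Suc.IH
    by (cases "n = 0") (simp_all add: B_def V_def algebra_simps)
qed



definition gd :: "nat \<Rightarrow> nat \<Rightarrow> real \<Rightarrow> real" where
  "gd n k u = real (n - k) * u ^ (n - k - 1) * (1 - u) ^ (k - 1)
              - real (k - 1) * u ^ (n - k) * (1 - u) ^ (k - 2)"

lemma g_deriv: "(g n k has_real_derivative gd n k u) (at u)"
proof -
  have "((\<lambda>u. u ^ (n - k) * (1 - u) ^ (k - 1)) has_real_derivative
     (real (n - k) * u ^ (n - k - 1)) * (1 - u) ^ (k - 1) + u ^ (n - k) * (real (k - 1) * (1 - u) ^ (k - 1 - 1) * (- 1))) (at u)"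
    by (intro derivative_eq_intros) auto
  moreover have "k - 1 - 1 = k - 2" by simp
  ultimately show ?thesis unfolding g_def[abs_def] gd_def by (simp add: algebra_simps)
qed

lemma deriv_g: "deriv (g n k) = gd n k"
  using g_deriv DERIV_imp_deriv by blast

lemma gd_sum:
  assumes "1 \<le> r" "r \<le> m"
  shows "(\<Sum>k=1..r. real (m choose (k - 1)) * gd (Suc m) k u)
     = real m * real ((m - 1) choose (r - 1)) * u ^ (m - r) * (1 - u) ^ (r - 1)"
  using assms
proof (induction r rule: nat_induct_at_least)
  case base
  then show ?case by (simp add: gd_def)
next
  case (Suc r)
  define q where "q = m - r - 1"
  have q: "m - r = Suc q" unfolding q_def using Suc(3) by simp
  define p where "p = r - 1"
  have p: "r = Suc p" unfolding p_def using Suc(1) by simp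
  have m: "m = Suc (Suc (p + q))" using p q by linarith
  have b1: "real (m choose r) * real (m - r) = real m * real ((m - 1) choose r)"
  proof -
    have "(m - r) * (m choose r) = m * ((m - 1) choose r)" by (rule binomial_absorb_comp)
    then have "real ((m - r) * (m choose r)) = real (m * ((m - 1) choose r))" by simp
    then show ?thesis by (simp only: of_nat_mult mult.commute)
  qed
  have b2: "real (m choose r) * real r = real m * real ((m - 1) choose (r - 1))"
  proof -
    have "Suc p * (m choose Suc p) = m * ((m - 1) choose p)" by (rule binomial_absorption)
    then have "real (Suc p * (m choose Suc p)) = real (m * ((m - 1) choose p))" by simp
    then show ?thesis unfolding p by (simp only: of_nat_mult mult.commute diff_Suc_1)
  qed
  have "(\<Sum>k=1..Suc r. real (m choose (k - 1)) * gd (Suc m) k u)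
      = real m * real ((m - 1) choose (r - 1)) * u ^ (m - r) * (1 - u) ^ (r - 1)
        + real (m choose r) * gd (Suc m) (Suc r) u"
    using Suc by simp
  also have "gd (Suc m) (Suc r) u = real (m - r) * u ^ q * (1 - u) ^ r - real r * u ^ (m - r) * (1 - u) ^ p"
    unfolding gd_def using q p by simp
  also have "real m * real ((m - 1) choose (r - 1)) * u ^ (m - r) * (1 - u) ^ (r - 1)
        + real (m choose r) * (real (m - r) * u ^ q * (1 - u) ^ r - real r * u ^ (m - r) * (1 - u) ^ p)
      = (real (m choose r) * real (m - r)) * u ^ q * (1 - u) ^ r
        + (real m * real ((m - 1) choose (r - 1)) - real (m choose r) * real r) * u ^ (m - r) * (1 - u) ^ p"
    using p by (simp add: algebra_simps)
  also have "\<dots> = real m * real ((m - 1) choose (Suc r - 1)) * u ^ (m - Suc r) * (1 - u) ^ (Suc r - 1)"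
  proof -
    have q2: "m - Suc r = q" using q by simp
    show ?thesis unfolding b1 b2 q2 using p by simp
  qed
  finally show ?case .
qed

lemma gd_sum_nonneg:
  assumes "1 \<le> r" "r < n" "0 \<le> u" "u \<le> 1"
  shows "(\<Sum>k=1..r. real ((n - 1) choose (k - 1)) * gd n k u) \<ge> 0"
proof -
  obtain m where m: "n = Suc m" using assms by (cases n) auto
  show ?thesis using gd_sum[of r m u] assms m by simp
qed

lemma gd_sum_total:
  assumes "2 \<le> n"
  shows "(\<Sum>k=1..n. real ((n - 1) choose (k - 1)) * gd n k u) = 0"
proof -
  obtain m where m: "n = Suc m" and m1: "1 \<le> m" using assms by (cases n) auto
  have "(\<Sum>k=1..Suc m. real (m choose (k - 1)) * gd (Suc m) k u)
     = (\<Sum>k=1..m. real (m choose (k - 1)) * gd (Suc m) k u) + gd (Suc m) (Suc m) u" by simp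
  also have "\<dots> = real m * (1 - u) ^ (m - 1) + gd (Suc m) (Suc m) u"
    using gd_sum[of m m u] m1 by simp
  also have "gd (Suc m) (Suc m) u = - real m * (1 - u) ^ (m - 1)"
    unfolding gd_def using m1 by (simp add: numeral_2_eq_2)
  finally show ?thesis using m by simp
qed



lemma tangent_Icc:
  fixes f :: "real \<Rightarrow> real"
  assumes convex: "convex_on {a..b} f" and c: "c \<in> {a..b}" and x: "x \<in> {a..b}"
  assumes deriv: "(f has_field_derivative f') (at c within {a..b})"
  shows   "f x - f c \<ge> f' * (x - c)"
proof (cases x c rule: linorder_cases)
  assume xc: "x > c"
  let ?A' = "{c<..<x}"
  have "at c within ?A' \<noteq> bot" using xc by (simp add: at_within_eq_bot_iff)
  moreover from deriv have "((\<lambda>y. (f y - f c) / (y - c)) \<longlongrightarrow> f') (at c within ?A')"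
    unfolding has_field_derivative_iff using c x by (elim tendsto_mono[rotated]) (intro at_le, auto)
  moreover have "eventually (\<lambda>y. (f y - f c) / (y - c) \<le> (f x - f c) / (x - c)) (at c within ?A')"
    unfolding eventually_at_filter
  proof (intro always_eventually allI impI)
    fix y assume y: "y \<noteq> c" "y \<in> {c<..<x}"
    with convex x c have "f y \<le> (f x - f c) / (x - c) * (y - c) + f c"
      by (intro convex_onD_Icc' convex_on_subset[OF convex]) auto
    hence "f y - f c \<le> (f x - f c) / (x - c) * (y - c)" by simp
    thus "(f y - f c) / (y - c) \<le> (f x - f c) / (x - c)" using y xc by (simp add: field_split_simps)
  qed
  ultimately have "f' \<le> (f x - f c) / (x - c)" by (simp add: tendsto_upperbound)
  thus ?thesis using xc by (simp add: field_simps)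
next
  assume xc: "x < c"
  let ?A' = "{x<..<c}"
  have "at c within ?A' \<noteq> bot" using xc by (simp add: at_within_eq_bot_iff)
  moreover from deriv have "((\<lambda>y. (f y - f c) / (y - c)) \<longlongrightarrow> f') (at c within ?A')"
    unfolding has_field_derivative_iff using c x by (elim tendsto_mono[rotated]) (intro at_le, auto)
  moreover have "eventually (\<lambda>y. (f y - f c) / (y - c) \<ge> (f x - f c) / (x - c)) (at c within ?A')"
    unfolding eventually_at_filter
  proof (intro always_eventually allI impI)
    fix y assume y: "y \<noteq> c" "y \<in> {x<..<c}"
    with convex x c have "f y \<le> (f x - f c) / (c - x) * (c - y) + f c"
      by (intro convex_onD_Icc'' convex_on_subset[OF convex]) auto
    hence "f y - f c \<le> (f x - f c) * ((c - y) / (c - x))" by simp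
    also have "(c - y) / (c - x) = (y - c) / (x - c)" using y xc by (simp add: field_simps)
    finally show "(f y - f c) / (y - c) \<ge> (f x - f c) / (x - c)" using y xc
      by (simp add: field_split_simps)
  qed
  ultimately have "f' \<ge> (f x - f c) / (x - c)" by (simp add: tendsto_lowerbound)
  thus ?thesis using xc by (simp add: field_simps)
qed simp_all

lemma strict_tangent:
  fixes c :: "real \<Rightarrow> real"
  assumes sc: "strictly_convex_on {a..b} c" and x: "x \<in> {a..b}" and y: "y \<in> {a..b}" and xy: "x \<noteq> y"
    and d: "\<And>z. z \<in> {a..b} \<Longrightarrow> (c has_real_derivative c' z) (at z within {a..b})"
  shows "c y - c x > c' x * (y - x)"
proof -
  have conv: "convex_on {a..b} c"
  proof (rule convex_on_linorderI)
    fix t x y :: real assume "t > 0" "t < 1" "x \<in> {a..b}" "y \<in> {a..b}" "x < y"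
    then show "c ((1 - t) *\<^sub>R x + t *\<^sub>R y) \<le> (1 - t) * c x + t * c y"
      using sc unfolding strictly_convex_on_def by (simp add: less_eq_real_def)
  qed simp
  define z where "z = (1 - 1/2) * x + (1/2) * y"
  have zab: "z \<in> {a..b}" using x y unfolding z_def by auto
  have "c z < (1 - 1/2) * c x + (1/2) * c y"
    using sc x y xy unfolding strictly_convex_on_def z_def by (metis atLeastAtMost_iff divide_pos_pos field_sum_of_halves half_gt_zero_iff zero_less_one less_add_same_cancel2 nle_le)
  moreover have "c z - c x \<ge> c' x * (z - x)"
    by (rule tangent_Icc[OF conv x zab d[OF x]])
  ultimately show ?thesis unfolding z_def by (simp add: algebra_simps)
qed

lemma deriv_strict_mono:
  fixes c :: "real \<Rightarrow> real"
  assumes sc: "strictly_convex_on {a..b} c" and x: "x \<in> {a..b}" and y: "y \<in> {a..b}" and xy: "x < y"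
    and d: "\<And>z. z \<in> {a..b} \<Longrightarrow> (c has_real_derivative c' z) (at z within {a..b})"
  shows "c' x < c' y"
proof -
  have "c y - c x > c' x * (y - x)" using strict_tangent[OF sc x y _ d] xy by auto
  moreover have "c x - c y > c' y * (x - y)" using strict_tangent[OF sc y x _ d] xy by auto
  ultimately have "0 < (c' y - c' x) * (y - x)" by (simp add: algebra_simps)
  then show ?thesis using xy by (simp add: zero_less_mult_iff)
qed



lemma F_range:
  fixes f :: "real \<Rightarrow> real"
  assumes f_nonneg: "\<And>t. f t \<ge> 0" and f_int: "integrable lborel f"
    and f_total: "(LINT t|lborel. f t) = 1"
    and F_cdf: "\<And>x. F x = (LINT t:{..x}|lborel. f t)"
  shows "0 \<le> F x \<and> F x \<le> 1"
proof
  show "0 \<le> F x" unfolding F_cdf set_lebesgue_integral_def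
    by (intro integral_nonneg_AE) (auto simp: f_nonneg)
  have "F x = (LINT t|lborel. indicator {..x} t * f t)" unfolding F_cdf set_lebesgue_integral_def by simp
  also have "\<dots> \<le> (LINT t|lborel. f t)"
  proof (rule integral_mono)
    have "integrable lborel (\<lambda>t. indicator {..x} t *\<^sub>R f t)" by (rule integrable_mult_indicator) (auto simp: f_int)
    then show "integrable lborel (\<lambda>t. indicator {..x} t * f t)" by simp
  qed (auto simp: f_nonneg f_int indicator_def)
  finally show "F x \<le> 1" using f_total by simp
qed

lemma Bsum_integral:
  assumes finite_ints: "\<And>r. 1 \<le> r \<Longrightarrow> r \<le> n \<Longrightarrow>
         integrable lborel (\<lambda>t. deriv (g n r) (F t) * (f t)^2)"
    and j: "j \<le> n"
  shows "(\<Sum>k=1..j. beta F f n k) = (LINT t|lborel. (\<Sum>k=1..j. real ((n - 1) choose (k - 1)) * gd n k (F t)) * (f t)^2)"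
proof -
  have "(\<Sum>k=1..j. beta F f n k) = (\<Sum>k=1..j. LINT t|lborel. real ((n - 1) choose (k - 1)) * (gd n k (F t) * (f t)^2))"
    unfolding beta_def deriv_g by simp
  also have "\<dots> = (LINT t|lborel. (\<Sum>k=1..j. real ((n - 1) choose (k - 1)) * (gd n k (F t) * (f t)^2)))"
  proof -
    have "\<And>k. k \<in> {1..j} \<Longrightarrow> integrable lborel (\<lambda>t. real ((n - 1) choose (k - 1)) * (gd n k (F t) * (f t)^2))"
      using finite_ints j unfolding deriv_g by auto
    from Bochner_Integration.integral_sum[where I="{1..j}" and f="\<lambda>k t. real ((n - 1) choose (k - 1)) * (gd n k (F t) * (f t)^2)", OF this]
    show ?thesis by simp
  qed
  also have "\<dots> = (LINT t|lborel. (\<Sum>k=1..j. real ((n - 1) choose (k - 1)) * gd n k (F t)) * (f t)^2)"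
    by (simp add: sum_distrib_right mult.assoc)
  finally show ?thesis .
qed

theorem proposition1:
  fixes n :: nat and F f :: "real \<Rightarrow> real"
    and c c' :: "real \<Rightarrow> real" and xbar :: real and v :: "nat \<Rightarrow> real"
  assumes n2: "n \<ge> 2"
    and f_meas: "f \<in> borel_measurable borel"
    and f_nonneg: "\<And>t. f t \<ge> 0"
    and f_int: "integrable lborel f"
    and f_total: "(LINT t|lborel. f t) = 1"
    and F_cdf: "\<And>x. F x = (LINT t:{..x}|lborel. f t)"
    and finite_ints: "\<And>r. 1 \<le> r \<Longrightarrow> r \<le> n \<Longrightarrow>
         integrable lborel (\<lambda>t. deriv (g n r) (F t) * (f t)^2)"
    and xbar_pos: "xbar > 0"
    and c_xbar: "c xbar = 1"
    and c_mono: "strict_mono_on {0..xbar} c"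
    and c_deriv: "\<And>x. x \<in> {0..xbar} \<Longrightarrow> (c has_real_derivative c' x) (at x within {0..xbar})"
    and c_convex: "strictly_convex_on {0..xbar} c"
    and c0: "c 0 = 0" and c'0: "c' 0 = 0"
    and vV: "v \<in> prizeV n"
  shows
   "((\<forall>r. n div 2 < r \<and> r \<le> n \<longrightarrow> v r = 0) \<longrightarrow>
       Lf F f n v \<le> 0 \<and>
       (\<forall>\<theta>1 \<theta>2. 0 \<le> \<theta>1 \<and> \<theta>1 \<le> \<theta>2 \<and> \<theta>2 \<le> 1 \<longrightarrow>
          Mf F f n v \<theta>2 \<le> Mf F f n v \<theta>1 \<and>
          (\<forall>x1 x2. x1 \<in> {0..xbar} \<and> x2 \<in> {0..xbar} \<and>
              c' x1 = Mf F f n v \<theta>1 \<and> c' x2 = Mf F f n v \<theta>2 \<longrightarrow> x2 \<le> x1)))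
    \<and>
    ((\<forall>r. 1 \<le> r \<and> r \<le> (n + 1) div 2 \<longrightarrow> v r = v 1) \<longrightarrow>
       Lf F f n v \<ge> 0 \<and>
       (\<forall>\<theta>1 \<theta>2. 0 \<le> \<theta>1 \<and> \<theta>1 \<le> \<theta>2 \<and> \<theta>2 \<le> 1 \<longrightarrow>
          Mf F f n v \<theta>1 \<le> Mf F f n v \<theta>2 \<and>
          (\<forall>x1 x2. x1 \<in> {0..xbar} \<and> x2 \<in> {0..xbar} \<and>
              c' x1 = Mf F f n v \<theta>1 \<and> c' x2 = Mf F f n v \<theta>2 \<longrightarrow> x1 \<le> x2)))"
  proof -
  define b where "b = beta F f n"
  define B where "B = (\<lambda>j. \<Sum>k=1..j. b k)"
  have Fr: "\<And>t. 0 \<le> F t \<and> F t \<le> 1" by (rule F_range[OF f_nonneg f_int f_total F_cdf])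
  have Bnn: "B j \<ge> 0" if "1 \<le> j" "j < n" for j
  proof -
    have "B j = (LINT t|lborel. (\<Sum>k=1..j. real ((n - 1) choose (k - 1)) * gd n k (F t)) * (f t)^2)"
      unfolding B_def b_def using Bsum_integral[OF finite_ints] that by simp
    also have "\<dots> \<ge> 0"
      by (intro integral_nonneg_AE AE_I2 mult_nonneg_nonneg gd_sum_nonneg) (use that Fr in auto)
    finally show ?thesis .
  qed
  have Bn0: "B n = 0"
  proof -
    have "B n = (LINT t|lborel. (\<Sum>k=1..n. real ((n - 1) choose (k - 1)) * gd n k (F t)) * (f t)^2)"
      unfolding B_def b_def using Bsum_integral[OF finite_ints] by simp
    also have "\<dots> = 0" using gd_sum_total[OF n2] by simp
    finally show ?thesis .
  qed
  define T where "T = (\<Sum>j=1..<n. (v j - v (j+1)) * (real n - 2 * real j) * B j)"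
  have Lform: "Lf F f n v = - (1 / real n) * T"
    unfolding Lf_def T_def using Sform[of b v n] Bn0 unfolding B_def b_def by simp
  have vmono: "\<And>r. 1 \<le> r \<Longrightarrow> r < n \<Longrightarrow> v (r + 1) \<le> v r" using vV unfolding prizeV_def by auto
  have npos: "real n > 0" using n2 by simp
  have xmono: "x2 \<le> x1" if "x1 \<in> {0..xbar}" "x2 \<in> {0..xbar}" "c' x2 \<le> c' x1" for x1 x2
  proof (rule ccontr)
    assume "\<not> x2 \<le> x1"
    then have "c' x1 < c' x2" using deriv_strict_mono[OF c_convex that(1,2) _ c_deriv] by simp
    then show False using that(3) by simp
  qed
  have A: "Lf F f n v \<le> 0" if H: "\<forall>r. n div 2 < r \<and> r \<le> n \<longrightarrow> v r = 0"
  proof -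
    have "T \<ge> 0" unfolding T_def
    proof (rule sum_nonneg)
      fix j assume j: "j \<in> {1..<n}"
      show "0 \<le> (v j - v (j+1)) * (real n - 2 * real j) * B j"
      proof (cases "j \<le> n div 2")
        case True
        then have "real n - 2 * real j \<ge> 0" by linarith
        moreover have "v j - v (j+1) \<ge> 0" using vmono[of j] j by auto
        ultimately show ?thesis using Bnn[of j] j by simp
      next
        case False
        then have "v j = 0" "v (j+1) = 0" using H j by auto
        then show ?thesis by simp
      qed
    qed
    then show ?thesis unfolding Lform using npos by (simp add: mult_nonneg_nonneg)
  qed
  have Bc: "Lf F f n v \<ge> 0" if H: "\<forall>r. 1 \<le> r \<and> r \<le> (n + 1) div 2 \<longrightarrow> v r = v 1"
  proof -
    have "T \<le> 0" unfolding T_def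
    proof (rule sum_nonpos)
      fix j assume j: "j \<in> {1..<n}"
      show "(v j - v (j+1)) * (real n - 2 * real j) * B j \<le> 0"
      proof (cases "j < (n + 1) div 2")
        case True
        have j1: "1 \<le> j \<and> j \<le> (n + 1) div 2" using True j by simp
        have j2: "1 \<le> j + 1 \<and> j + 1 \<le> (n + 1) div 2" using True by simp
        have "v j = v 1" using H j1 by blast
        moreover have "v (j+1) = v 1" using H j2 by blast
        ultimately show ?thesis by simp
      next
        case False
        then have "n \<le> 2 * j" by presburger
        then have "real n - 2 * real j \<le> 0" by linarith
        moreover have "v j - v (j+1) \<ge> 0" using vmono[of j] j by auto
        ultimately show ?thesis using Bnn[of j] j
          by (simp add: mult_nonneg_nonpos mult_nonpos_nonneg)
      qed
    qed
    then show ?thesis unfolding Lform using npos by (simp add: divide_nonpos_pos)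
  qed
  have P1: "Mf F f n v \<theta>2 \<le> Mf F f n v \<theta>1 \<and>
          (\<forall>x1 x2. x1 \<in> {0..xbar} \<and> x2 \<in> {0..xbar} \<and>
              c' x1 = Mf F f n v \<theta>1 \<and> c' x2 = Mf F f n v \<theta>2 \<longrightarrow> x2 \<le> x1)"
    if L: "Lf F f n v \<le> 0" and th: "0 \<le> \<theta>1 \<and> \<theta>1 \<le> \<theta>2 \<and> \<theta>2 \<le> 1" for \<theta>1 \<theta>2
  proof -
    have "\<theta>2 * Lf F f n v \<le> \<theta>1 * Lf F f n v" by (rule mult_right_mono_neg) (use th L in auto)
    then have M: "Mf F f n v \<theta>2 \<le> Mf F f n v \<theta>1" unfolding Mf_def by linarith
    show ?thesis
    proof (intro conjI allI impI)
      show "Mf F f n v \<theta>2 \<le> Mf F f n v \<theta>1" by (rule M)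
    next
      fix x1 x2 assume h: "x1 \<in> {0..xbar} \<and> x2 \<in> {0..xbar} \<and>
              c' x1 = Mf F f n v \<theta>1 \<and> c' x2 = Mf F f n v \<theta>2"
      then have "c' x2 \<le> c' x1" using M by simp
      then show "x2 \<le> x1" using xmono[of x1 x2] h by blast
    qed
  qed
  have P2: "Mf F f n v \<theta>1 \<le> Mf F f n v \<theta>2 \<and>
          (\<forall>x1 x2. x1 \<in> {0..xbar} \<and> x2 \<in> {0..xbar} \<and>
              c' x1 = Mf F f n v \<theta>1 \<and> c' x2 = Mf F f n v \<theta>2 \<longrightarrow> x1 \<le> x2)"
    if L: "Lf F f n v \<ge> 0" and th: "0 \<le> \<theta>1 \<and> \<theta>1 \<le> \<theta>2 \<and> \<theta>2 \<le> 1" for \<theta>1 \<theta>2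
  proof -
    have "\<theta>1 * Lf F f n v \<le> \<theta>2 * Lf F f n v" by (rule mult_right_mono) (use th L in auto)
    then have M: "Mf F f n v \<theta>1 \<le> Mf F f n v \<theta>2" unfolding Mf_def by linarith
    show ?thesis
    proof (intro conjI allI impI)
      show "Mf F f n v \<theta>1 \<le> Mf F f n v \<theta>2" by (rule M)
    next
      fix x1 x2 assume h: "x1 \<in> {0..xbar} \<and> x2 \<in> {0..xbar} \<and>
              c' x1 = Mf F f n v \<theta>1 \<and> c' x2 = Mf F f n v \<theta>2"
      then have "c' x1 \<le> c' x2" using M by simp
      then show "x1 \<le> x2" using xmono[of x2 x1] h by blast
    qed
  qed
  show ?thesis using A Bc P1 P2 by blast
qed

end
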